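(* Let $F$ be a non-degenerate distribution function with finite second moment belonging to the class NCP. If there exist a finite constant $C$ and a positive integer $k_0$ such that \[ \frac{\mathbb{E}[Z_k^2]}{k\,(\mathbb{E}[Z_k])^2}\le C\quad\text{for all }k\ge k_0, \] then the partial maxima BLUE $L_2^{(n)}$ of $\theta_2$ satisfies $\operatorname{Var}[L_2^{(n)}]=O(1/\log n)$ as $n\to\infty$.
   Context: For unknown $\theta_1\in\mathbb{R}$, $\theta_2>0$, $X_1^*,\dots,X_n^*$ are i.i.d. with distribution function $F((x-\theta_1)/\theta_2)$, $X^*_{j:j}=\max\{X_1^*,\dots,X_j^*\}$. Linear estimators are $\sum_i c_iX^*_{i:i}$ with constant $c_i$; $L_2^{(n)}$ is the linear estimator unbiased for $\theta_2$ for all $(\theta_1,\theta_2)$ with minimum variance. Let $X_1,X_2,\dots$ be i.i.d. from $F$, $X_{k:k}=\max\{X_1,\dots,X_k\}$, and $Z_k=X_{k+1:k+1}-X_{k:k}$, $k\ge1$. $F$ belongs to NCP if $\operatorname{Cov}[Z_i,Z_j]\le0$ for all positive integers $i\ne j$. *)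

theory Defs
  imports "HOL-Probability.Probability" "HOL-Library.Landau_Symbols"
begin

text \<open>Partial maximum X_{k:k} = max of X_1..X_k; the sample is indexed X 0, ..., X (k-1).\<close>
definition pmax :: "(nat \<Rightarrow> 'a \<Rightarrow> real) \<Rightarrow> nat \<Rightarrow> 'a \<Rightarrow> real" where
  "pmax X k \<omega> = Max ((\<lambda>i. X i \<omega>) ` {..<k})"

definition Zinc :: "(nat \<Rightarrow> 'a \<Rightarrow> real) \<Rightarrow> nat \<Rightarrow> 'a \<Rightarrow> real" where
  "Zinc X k \<omega> = pmax X (Suc k) \<omega> - pmax X k \<omega>"

definition covar :: "'a measure \<Rightarrow> ('a \<Rightarrow> real) \<Rightarrow> ('a \<Rightarrow> real) \<Rightarrow> real" where
  "covar M U V = (\<integral>\<omega>. (U \<omega> - (\<integral>x. U x \<partial>M)) * (V \<omega> - (\<integral>x. V x \<partial>M)) \<partial>M)"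

definition NCP :: "'a measure \<Rightarrow> (nat \<Rightarrow> 'a \<Rightarrow> real) \<Rightarrow> bool" where
  "NCP M X \<longleftrightarrow> (\<forall>i j. 1 \<le> i \<longrightarrow> 1 \<le> j \<longrightarrow> i \<noteq> j \<longrightarrow> covar M (Zinc X i) (Zinc X j) \<le> 0)"

text \<open>Linear estimator sum_{i=1}^n c_i X*_{i:i}, where X*_j = t1 + t2 X_j.\<close>
definition lin_est :: "(nat \<Rightarrow> 'a \<Rightarrow> real) \<Rightarrow> real \<Rightarrow> real \<Rightarrow> (nat \<Rightarrow> real) \<Rightarrow> nat \<Rightarrow> 'a \<Rightarrow> real" where
  "lin_est X t1 t2 c n \<omega> = (\<Sum>i=1..n. c i * (t1 + t2 * pmax X i \<omega>))"

definition unbiased_theta2 :: "'a measure \<Rightarrow> (nat \<Rightarrow> 'a \<Rightarrow> real) \<Rightarrow> nat \<Rightarrow> (nat \<Rightarrow> real) \<Rightarrow> bool" where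
  "unbiased_theta2 M X n c \<longleftrightarrow>
     (\<forall>t1 t2. t2 > 0 \<longrightarrow> (\<integral>\<omega>. lin_est X t1 t2 c n \<omega> \<partial>M) = t2)"

text \<open>Variance of the BLUE L_2^{(n)} under the parameter (t1, t2): the minimal variance
  among unbiased linear estimators.\<close>
definition blue_var :: "'a measure \<Rightarrow> (nat \<Rightarrow> 'a \<Rightarrow> real) \<Rightarrow> real \<Rightarrow> real \<Rightarrow> nat \<Rightarrow> real" where
  "blue_var M X t1 t2 n =
     Inf {prob_space.variance M (lin_est X t1 t2 c n) | c. unbiased_theta2 M X n c}"

end

theory Submission imports Defs begin


lemma pmax_meas[measurable]:
  assumes "\<And>i. X i \<in> borel_measurable M"
  shows "pmax X k \<in> borel_measurable M"
  unfolding pmax_def[abs_def] using assms by measurable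

lemma Zinc_meas[measurable]:
  assumes "\<And>i. X i \<in> borel_measurable M"
  shows "Zinc X k \<in> borel_measurable M"
  unfolding Zinc_def[abs_def] using pmax_meas[OF assms] by measurable

lemma Zinc_nonneg: "1 \<le> k \<Longrightarrow> 0 \<le> Zinc X k \<omega>"
  unfolding Zinc_def pmax_def
  by (auto intro!: Max_mono simp: lessThan_empty_iff)

lemma (in prob_space) Zinc_pos:
  assumes meas[measurable]: "\<And>i. X i \<in> borel_measurable M"
  and indep: "indep_vars (\<lambda>_. borel) X UNIV"
  and dis: "\<And>i. distr M borel (X i) = distr M borel (X 0)"
  and nondeg: "\<And>c. measure M {\<omega> \<in> space M. X 0 \<omega> = c} < 1"
  and intZ: "integrable M (Zinc X k)" and int0: "integrable M (X 0)"
  and k: "1 \<le> k"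
  shows "0 < (\<integral>\<omega>. Zinc X k \<omega> \<partial>M)"
proof -
  define m where "m = (\<integral>\<omega>. X 0 \<omega> \<partial>M)"
  have transfer: "prob {\<omega>\<in>space M. X i \<omega> \<in> A} = prob {\<omega>\<in>space M. X 0 \<omega> \<in> A}"
    if "A \<in> sets borel" for i A
  proof -
    have "prob {\<omega>\<in>space M. X i \<omega> \<in> A} = measure (distr M borel (X i)) A"
      using that by (subst measure_distr) (auto intro!: arg_cong[where f="measure M"])
    also have "\<dots> = measure (distr M borel (X 0)) A" using dis[of i] by (rule arg_cong)
    also have "\<dots> = prob {\<omega>\<in>space M. X 0 \<omega> \<in> A}"
      using that by (subst measure_distr) (auto intro!: arg_cong[where f="measure M"])
    finally show ?thesis .
  qed
  have pgt: "prob {\<omega>\<in>space M. m < X 0 \<omega>} > 0"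
  proof (rule ccontr)
    assume "\<not> ?thesis"
    then have "prob {\<omega>\<in>space M. m < X 0 \<omega>} = 0" using measure_nonneg[of M] by (meson antisym not_less)
    then have ae: "AE \<omega> in M. \<not> m < X 0 \<omega>" by (subst (asm) prob_Collect_eq_0) auto
    have i: "integrable M (\<lambda>\<omega>. m - X 0 \<omega>)" using int0 by auto
    have "(\<integral>\<omega>. m - X 0 \<omega> \<partial>M) = 0" using int0 by (simp add: m_def prob_space)
    moreover have ae2: "AE \<omega> in M. 0 \<le> m - X 0 \<omega>" using ae by eventually_elim auto
    ultimately have "AE \<omega> in M. m - X 0 \<omega> = 0"
      using integral_nonneg_eq_0_iff_AE[OF i ae2] by simp
    then have "AE \<omega> in M. X 0 \<omega> = m" by auto
    then have "prob {\<omega>\<in>space M. X 0 \<omega> = m} = 1" by (subst prob_Collect_eq_1) auto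
    with nondeg[of m] show False by simp
  qed
  have plt: "prob {\<omega>\<in>space M. X 0 \<omega> < m} > 0"
  proof (rule ccontr)
    assume "\<not> ?thesis"
    then have "prob {\<omega>\<in>space M. X 0 \<omega> < m} = 0" using measure_nonneg[of M] by (meson antisym not_less)
    then have ae: "AE \<omega> in M. \<not> X 0 \<omega> < m" by (subst (asm) prob_Collect_eq_0) auto
    have i: "integrable M (\<lambda>\<omega>. X 0 \<omega> - m)" using int0 by auto
    have "(\<integral>\<omega>. X 0 \<omega> - m \<partial>M) = 0" using int0 by (simp add: m_def prob_space)
    moreover have ae2: "AE \<omega> in M. 0 \<le> X 0 \<omega> - m" using ae by eventually_elim auto
    ultimately have "AE \<omega> in M. X 0 \<omega> - m = 0"
      using integral_nonneg_eq_0_iff_AE[OF i ae2] by simp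
    then have "AE \<omega> in M. X 0 \<omega> = m" by auto
    then have "prob {\<omega>\<in>space M. X 0 \<omega> = m} = 1" by (subst prob_Collect_eq_1) auto
    with nondeg[of m] show False by simp
  qed
  define Q where "Q j x = (if j = k then m < x else x < m)" for j and x :: real
  define E where "E = (\<Inter>j\<in>{..k}. {x\<in>space M. Q j (X j x)})"
  have ie: "indep_events (\<lambda>j. {x\<in>space M. Q j (X j x)}) UNIV"
    by (rule indep_eventsI_indep_vars[OF indep]) (auto simp: Q_def)
  have "prob E = (\<Prod>j\<in>{..k}. prob {x\<in>space M. Q j (X j x)})"
    using ie unfolding indep_events_def E_def by auto
  also have "\<dots> = (\<Prod>j<k. prob {x\<in>space M. Q j (X j x)}) * prob {x\<in>space M. Q k (X k x)}"
    by (simp add: lessThan_Suc_atMost[symmetric])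
  also have "\<dots> > 0"
  proof -
    have "prob {x\<in>space M. Q j (X j x)} = prob {\<omega>\<in>space M. X 0 \<omega> < m}" if "j < k" for j
      using transfer[of "{..<m}" j] that by (simp add: Q_def)
    moreover have "prob {x\<in>space M. Q k (X k x)} = prob {\<omega>\<in>space M. m < X 0 \<omega>}"
      using transfer[of "{m<..}" k] by (simp add: Q_def)
    ultimately show ?thesis using pgt plt by (simp add: prod_pos)
  qed
  finally have pE: "prob E > 0" .
  have sub: "E \<subseteq> {\<omega>\<in>space M. 0 < Zinc X k \<omega>}"
  proof
    fix x assume x: "x \<in> E"
    then have xs: "x \<in> space M" using E_def by auto
    have a: "m < X k x" using x by (auto simp: E_def Q_def)
    have b: "X j x < m" if "j < k" for j using x that by (auto simp: E_def Q_def)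
    have "X k x \<le> pmax X (Suc k) x" unfolding pmax_def by (auto intro!: Max_ge)
    moreover have "pmax X k x < m" unfolding pmax_def using k b by (subst Max_less_iff) (auto simp: lessThan_empty_iff)
    ultimately show "x \<in> {\<omega>\<in>space M. 0 < Zinc X k \<omega>}" using a xs by (auto simp: Zinc_def)
  qed
  have nn: "AE \<omega> in M. 0 \<le> Zinc X k \<omega>" by (intro AE_I2 Zinc_nonneg[OF k])
  show ?thesis
  proof (rule ccontr)
    assume "\<not> ?thesis"
    then have "(\<integral>\<omega>. Zinc X k \<omega> \<partial>M) = 0" using integral_nonneg_AE[OF nn] by linarith
    then have "AE \<omega> in M. Zinc X k \<omega> = 0" using integral_nonneg_eq_0_iff_AE[OF intZ nn] by auto
    then have "prob {\<omega>\<in>space M. 0 < Zinc X k \<omega>} = 0" by (subst prob_Collect_eq_0) auto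
    moreover have "prob E \<le> prob {\<omega>\<in>space M. 0 < Zinc X k \<omega>}"
      by (rule finite_measure_mono[OF sub]) simp
    ultimately show False using pE by simp
  qed
qed


lemma tel: "d 0 = 0 \<Longrightarrow> (\<Sum>i=1..n. (d (i-1) - d i) * P i) = (\<Sum>k<n. d k * (P (Suc k) - P k)) - d n * P n"
  for d P :: "nat \<Rightarrow> real"
  proof (induction n)
  case (Suc n)
  have "(\<Sum>i=1..Suc n. (d (i-1) - d i) * P i) = (\<Sum>i=1..n. (d (i-1) - d i) * P i) + (d n - d (Suc n)) * P (Suc n)"
    by (simp add: sum.cl_ivl_Suc)
  then show ?case using Suc by (simp add: algebra_simps)
qed simp

lemma L2_mult:
  fixes f g :: "'a \<Rightarrow> real"
  assumes [measurable]: "f \<in> borel_measurable M" "g \<in> borel_measurable M"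
    and "integrable M (\<lambda>x. (f x)\<^sup>2)" "integrable M (\<lambda>x. (g x)\<^sup>2)"
  shows "integrable M (\<lambda>x. f x * g x)"
proof (rule Bochner_Integration.integrable_bound)
  show "integrable M (\<lambda>x. (f x)\<^sup>2 + (g x)\<^sup>2)" using assms by auto
  show "AE x in M. norm (f x * g x) \<le> norm ((f x)\<^sup>2 + (g x)\<^sup>2)"
  proof (intro AE_I2)
    fix x
    have "0 \<le> (\<bar>f x\<bar> - \<bar>g x\<bar>)\<^sup>2" by simp
    then have "2 * (\<bar>f x\<bar> * \<bar>g x\<bar>) \<le> (f x)\<^sup>2 + (g x)\<^sup>2"
      by (simp add: power2_eq_square algebra_simps)
    moreover have "0 \<le> \<bar>f x\<bar> * \<bar>g x\<bar>" by simp
    ultimately have "\<bar>f x\<bar> * \<bar>g x\<bar> \<le> (f x)\<^sup>2 + (g x)\<^sup>2" by linarith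
    then show "norm (f x * g x) \<le> norm ((f x)\<^sup>2 + (g x)\<^sup>2)" by (simp add: abs_mult)
  qed
qed auto

lemma L2_diff:
  fixes f g :: "'a \<Rightarrow> real"
  assumes [measurable]: "f \<in> borel_measurable M" "g \<in> borel_measurable M"
    and "integrable M (\<lambda>x. (f x)\<^sup>2)" "integrable M (\<lambda>x. (g x)\<^sup>2)"
  shows "integrable M (\<lambda>x. (f x - g x)\<^sup>2)"
proof -
  have "(\<lambda>x. (f x - g x)\<^sup>2) = (\<lambda>x. (f x)\<^sup>2 + (g x)\<^sup>2 - 2 * (f x * g x))"
    by (auto simp: power2_eq_square algebra_simps)
  then show ?thesis using L2_mult[OF assms] assms by simp
qed


lemma (in prob_space) estimator:
  fixes X :: "nat \<Rightarrow> 'a \<Rightarrow> real"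
  assumes k0: "1 \<le> k0" "k0 < n"
    and Zm[measurable]: "\<And>k. Zinc X k \<in> borel_measurable M"
    and Zsq: "\<And>k. 1 \<le> k \<Longrightarrow> integrable M (\<lambda>\<omega>. (Zinc X k \<omega>)\<^sup>2)"
    and Zi: "\<And>k. 1 \<le> k \<Longrightarrow> integrable M (Zinc X k)"
    and epos: "\<And>k. 1 \<le> k \<Longrightarrow> 0 < (\<integral>\<omega>. Zinc X k \<omega> \<partial>M)"
    and ncp: "NCP M X"
    and Cb: "\<And>k. k0 \<le> k \<Longrightarrow> (\<integral>\<omega>. (Zinc X k \<omega>)\<^sup>2 \<partial>M) / (real k * (\<integral>\<omega>. Zinc X k \<omega> \<partial>M)\<^sup>2) \<le> C"
    and t2: "t2 > 0"
  shows "\<exists>c. unbiased_theta2 M X n c \<and>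
     variance (lin_est X t1 t2 c n) \<le> t2\<^sup>2 * C / (\<Sum>k\<in>{k0..<n}. 1 / real k)"
proof -
  define S where "S = {k0..<n}"
  define e where "e k = (\<integral>\<omega>. Zinc X k \<omega> \<partial>M)" for k
  define H where "H = (\<Sum>k\<in>S. 1 / real k)"
  define d where "d k = (if k \<in> S then 1 / (real k * e k * H) else 0)" for k
  define c where "c i = d (i - 1) - d i" for i
  have S1: "k \<in> S \<Longrightarrow> 1 \<le> k" for k using k0 by (auto simp: S_def)
  have finS: "finite S" by (simp add: S_def)
  have Sne: "S \<noteq> {}" using k0 by (auto simp: S_def)
  have Hpos: "H > 0" unfolding H_def using S1 finS Sne by (intro sum_pos) auto
  have d0: "d 0 = 0" using S1 by (auto simp: d_def)
  have dn: "d n = 0" by (auto simp: d_def S_def)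
  have dnn: "0 \<le> d k" for k using epos[of k] Hpos S1[of k] by (auto simp: d_def e_def)
  have sumc: "(\<Sum>i=1..n. c i) = 0"
    using tel[where d=d and n=n and P="\<lambda>_. 1", OF d0] dn by (simp add: c_def)
  define W where "W \<omega> = (\<Sum>k\<in>S. d k * Zinc X k \<omega>)" for \<omega>
  have cP: "(\<Sum>i=1..n. c i * pmax X i \<omega>) = W \<omega>" for \<omega>
  proof -
    have "(\<Sum>i=1..n. c i * pmax X i \<omega>) = (\<Sum>k<n. d k * Zinc X k \<omega>)"
      using tel[where d=d and n=n and P="\<lambda>i. pmax X i \<omega>", OF d0] dn by (simp add: c_def Zinc_def)
    also have "\<dots> = W \<omega>" unfolding W_def
      by (rule sum.mono_neutral_right) (auto simp: S_def d_def)
    finally show ?thesis .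
  qed
  have lin: "lin_est X t1' t c n \<omega> = t * W \<omega>" for t1' t \<omega>
  proof -
    have "lin_est X t1' t c n \<omega> = t1' * (\<Sum>i=1..n. c i) + t * (\<Sum>i=1..n. c i * pmax X i \<omega>)"
      unfolding lin_est_def by (simp add: algebra_simps sum.distrib sum_distrib_left)
    then show ?thesis using sumc cP by simp
  qed
  have de: "(\<Sum>k\<in>S. d k * e k) = 1"
  proof -
    have "(\<Sum>k\<in>S. d k * e k) = (\<Sum>k\<in>S. (1 / real k) / H)"
    proof (rule sum.cong)
      fix k assume k: "k \<in> S"
      have "e k > 0" using epos S1[OF k] by (simp add: e_def)
      then show "d k * e k = (1 / real k) / H" using k S1[OF k] Hpos by (simp add: d_def field_simps)
    qed simp
    also have "\<dots> = H / H" unfolding H_def by (rule sum_divide_distrib[symmetric])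
    also have "\<dots> = 1" using Hpos by simp
    finally show ?thesis .
  qed
  have Wi: "integrable M W" unfolding W_def using Zi S1 by auto
  have EW: "(\<integral>\<omega>. W \<omega> \<partial>M) = 1"
  proof -
    have "(\<integral>\<omega>. W \<omega> \<partial>M) = (\<Sum>k\<in>S. (\<integral>\<omega>. d k * Zinc X k \<omega> \<partial>M))"
      unfolding W_def using Zi S1 by (intro Bochner_Integration.integral_sum[where f="\<lambda>k \<omega>. d k * Zinc X k \<omega>"]) auto
    also have "\<dots> = (\<Sum>k\<in>S. d k * e k)" by (simp add: e_def)
    finally show ?thesis using de by simp
  qed
  have unb: "unbiased_theta2 M X n c"
    unfolding unbiased_theta2_def lin using EW by simp
  define Y where "Y k \<omega> = Zinc X k \<omega> - e k" for k \<omega>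
  have Ym[measurable]: "Y k \<in> borel_measurable M" for k unfolding Y_def by measurable
  have Ysq: "1 \<le> k \<Longrightarrow> integrable M (\<lambda>\<omega>. (Y k \<omega>)\<^sup>2)" for k
    unfolding Y_def by (rule L2_diff) (auto intro: Zsq)
  have YY: "k \<in> S \<Longrightarrow> l \<in> S \<Longrightarrow> integrable M (\<lambda>\<omega>. Y k \<omega> * Y l \<omega>)" for k l
    using S1 by (intro L2_mult Ysq) auto
  have cov: "covar M (Zinc X k) (Zinc X l) = (\<integral>\<omega>. Y k \<omega> * Y l \<omega> \<partial>M)" for k l
    unfolding covar_def Y_def e_def ..
  have Wc: "W \<omega> - 1 = (\<Sum>k\<in>S. d k * Y k \<omega>)" for \<omega>
    unfolding W_def Y_def using de by (simp add: algebra_simps sum_subtractf sum_distrib_left)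
  have sq: "(t2 * W \<omega> - t2)\<^sup>2 = t2\<^sup>2 * (\<Sum>k\<in>S. \<Sum>l\<in>S. d k * d l * (Y k \<omega> * Y l \<omega>))" for \<omega>
  proof -
    have "(t2 * W \<omega> - t2)\<^sup>2 = t2\<^sup>2 * (W \<omega> - 1)\<^sup>2" by (simp add: power2_eq_square algebra_simps)
    also have "\<dots> = t2\<^sup>2 * ((\<Sum>k\<in>S. d k * Y k \<omega>) * (\<Sum>l\<in>S. d l * Y l \<omega>))"
      by (simp add: Wc power2_eq_square)
    also have "\<dots> = t2\<^sup>2 * (\<Sum>k\<in>S. \<Sum>l\<in>S. d k * d l * (Y k \<omega> * Y l \<omega>))"
      by (simp add: sum_product algebra_simps)
    finally show ?thesis .
  qed
  have var: "variance (lin_est X t1 t2 c n) = t2\<^sup>2 * (\<Sum>k\<in>S. \<Sum>l\<in>S. d k * d l * covar M (Zinc X k) (Zinc X l))"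
  proof -
    have "variance (lin_est X t1 t2 c n) = (\<integral>\<omega>. (t2 * W \<omega> - t2)\<^sup>2 \<partial>M)"
      unfolding lin using EW by simp
    also have "\<dots> = (\<integral>\<omega>. t2\<^sup>2 * (\<Sum>k\<in>S. \<Sum>l\<in>S. d k * d l * (Y k \<omega> * Y l \<omega>)) \<partial>M)"
      by (simp only: sq)
    also have "\<dots> = t2\<^sup>2 * (\<Sum>k\<in>S. \<Sum>l\<in>S. d k * d l * (\<integral>\<omega>. Y k \<omega> * Y l \<omega> \<partial>M))"
      using YY by (simp add: Bochner_Integration.integral_sum Bochner_Integration.integrable_sum)
    finally show ?thesis by (simp add: cov)
  qed
  have diag: "covar M (Zinc X k) (Zinc X k) \<le> (\<integral>\<omega>. (Zinc X k \<omega>)\<^sup>2 \<partial>M)" if k: "1 \<le> k" for k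
  proof -
    have "(\<lambda>\<omega>. (Zinc X k \<omega> - e k) * (Zinc X k \<omega> - e k)) = (\<lambda>\<omega>. (Zinc X k \<omega>)\<^sup>2 - 2 * e k * Zinc X k \<omega> + (e k)\<^sup>2)"
      by (auto simp: power2_eq_square algebra_simps)
    then have "covar M (Zinc X k) (Zinc X k) = (\<integral>\<omega>. (Zinc X k \<omega>)\<^sup>2 \<partial>M) - (e k)\<^sup>2"
      unfolding covar_def using Zsq[OF k] Zi[OF k]
      by (simp add: e_def[symmetric] prob_space power2_eq_square)
    then show ?thesis by simp
  qed
  have row: "(\<Sum>l\<in>S. d k * d l * covar M (Zinc X k) (Zinc X l)) \<le> C / (real k * H\<^sup>2)" if k: "k \<in> S" for k
  proof -
    have "(\<Sum>l\<in>S. d k * d l * covar M (Zinc X k) (Zinc X l)) =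
        d k * d k * covar M (Zinc X k) (Zinc X k) + (\<Sum>l\<in>S-{k}. d k * d l * covar M (Zinc X k) (Zinc X l))"
      using k finS by (simp add: sum.remove)
    also have "(\<Sum>l\<in>S-{k}. d k * d l * covar M (Zinc X k) (Zinc X l)) \<le> 0"
    proof (rule sum_nonpos)
      fix l assume "l \<in> S - {k}"
      then have "covar M (Zinc X k) (Zinc X l) \<le> 0"
        using ncp S1 k unfolding NCP_def by auto
      then show "d k * d l * covar M (Zinc X k) (Zinc X l) \<le> 0"
        using dnn by (simp add: mult_nonneg_nonpos)
    qed
    also have "d k * d k * covar M (Zinc X k) (Zinc X k) \<le> d k * d k * (\<integral>\<omega>. (Zinc X k \<omega>)\<^sup>2 \<partial>M)"
      using diag[OF S1[OF k]] dnn by (simp add: mult_left_mono)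
    also have "d k * d k * (\<integral>\<omega>. (Zinc X k \<omega>)\<^sup>2 \<partial>M) =
       ((\<integral>\<omega>. (Zinc X k \<omega>)\<^sup>2 \<partial>M) / (real k * (e k)\<^sup>2)) * (1 / (real k * H\<^sup>2))"
      using k epos[OF S1[OF k]] S1[OF k] Hpos by (simp add: d_def e_def field_simps power2_eq_square)
    also have "\<dots> \<le> C * (1 / (real k * H\<^sup>2))"
      using Cb[of k] k by (intro mult_right_mono) (auto simp: S_def e_def)
    finally show ?thesis by simp
  qed
  have "variance (lin_est X t1 t2 c n) \<le> t2\<^sup>2 * (\<Sum>k\<in>S. C / (real k * H\<^sup>2))"
    unfolding var by (intro mult_left_mono sum_mono row) auto
  also have "(\<Sum>k\<in>S. C / (real k * H\<^sup>2)) = C / H"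
  proof -
    have "(\<Sum>k\<in>S. C / (real k * H\<^sup>2)) = (\<Sum>k\<in>S. 1 / real k * (C / H\<^sup>2))"
      by (rule sum.cong) (auto simp: field_simps)
    also have "\<dots> = (\<Sum>k\<in>S. 1 / real k) * (C / H\<^sup>2)"
      by (rule sum_distrib_right[symmetric])
    also have "\<dots> = C / H" using Hpos by (simp add: H_def[symmetric] power2_eq_square)
    finally show ?thesis .
  qed
  finally show ?thesis using unb by (auto simp: H_def S_def)
qed


lemma harm_lower:
  assumes "1 \<le> k0" "k0 \<le> n"
  shows "ln (real n) - ln (real k0) \<le> (\<Sum>k\<in>{k0..<n}. 1 / real k)"
proof -
  have "(\<Sum>k\<in>{k0..<n}. ln (real (Suc k)) - ln (real k)) = ln (real n) - ln (real k0)"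
    using sum_Suc_diff'[OF assms(2), of "\<lambda>k. ln (real k)"] by simp
  moreover have "ln (real (Suc k)) - ln (real k) \<le> 1 / real k" if "k \<in> {k0..<n}" for k
  proof -
    have k: "real k \<ge> 1" using that assms by auto
    have e: "1 + 1 / real k = real (Suc k) / real k" using k by (simp add: field_simps)
    have "ln (real (Suc k)) - ln (real k) = ln (1 + 1 / real k)"
      unfolding e using k by (simp add: ln_div)
    also have "\<dots> \<le> 1 / real k" using k by (intro ln_add_one_self_le_self) auto
    finally show ?thesis .
  qed
  then have "(\<Sum>k\<in>{k0..<n}. ln (real (Suc k)) - ln (real k)) \<le> (\<Sum>k\<in>{k0..<n}. 1 / real k)"
    by (intro sum_mono)
  ultimately show ?thesis by simp
qed

theorem theorem5p1:
  fixes M :: "'a measure" and X :: "nat \<Rightarrow> 'a \<Rightarrow> real"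
  assumes "prob_space M"
    and "\<And>i. X i \<in> borel_measurable M"
    and "prob_space.indep_vars M (\<lambda>_. borel) X UNIV"
    and "\<And>i. distr M borel (X i) = distr M borel (X 0)"
    and nondeg: "\<And>c. measure M {\<omega> \<in> space M. X 0 \<omega> = c} < 1"
    and second_moment: "integrable M (\<lambda>\<omega>. (X 0 \<omega>)\<^sup>2)"
    and "NCP M X"
    and "\<exists>C. \<exists>k0::nat. k0 \<ge> 1 \<and> (\<forall>k\<ge>k0.
           (\<integral>\<omega>. (Zinc X k \<omega>)\<^sup>2 \<partial>M) / (real k * (\<integral>\<omega>. Zinc X k \<omega> \<partial>M)\<^sup>2) \<le> C)"
    and "t2 > 0"
  shows "(\<lambda>n. blue_var M X t1 t2 n) \<in> O(\<lambda>n. 1 / ln (real n))"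
proof -
  interpret prob_space M by fact
  have meas[measurable]: "\<And>i. X i \<in> borel_measurable M" by fact
  have sqX: "integrable M (\<lambda>\<omega>. (X i \<omega>)\<^sup>2)" for i
  proof -
    have "integrable (distr M borel (X 0)) (\<lambda>x. x\<^sup>2)"
      by (subst integrable_distr_eq) (auto simp: second_moment)
    then have "integrable (distr M borel (X i)) (\<lambda>x. x\<^sup>2)" using assms(4)[of i] by simp
    then show ?thesis by (subst (asm) integrable_distr_eq) auto
  qed
  have Pm[measurable]: "pmax X k \<in> borel_measurable M" for k by (rule pmax_meas[OF meas])
  have Zm[measurable]: "Zinc X k \<in> borel_measurable M" for k by (rule Zinc_meas[OF meas])
  have sqP: "integrable M (\<lambda>\<omega>. (pmax X k \<omega>)\<^sup>2)" if k: "1 \<le> k" for k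
  proof (rule Bochner_Integration.integrable_bound)
    show "integrable M (\<lambda>\<omega>. \<Sum>i<k. (X i \<omega>)\<^sup>2)" using sqX by auto
    show "AE \<omega> in M. norm ((pmax X k \<omega>)\<^sup>2) \<le> norm (\<Sum>i<k. (X i \<omega>)\<^sup>2)"
    proof (intro AE_I2)
      fix \<omega>
      have "pmax X k \<omega> \<in> (\<lambda>i. X i \<omega>) ` {..<k}"
        unfolding pmax_def using k by (intro Max_in) (auto simp: lessThan_empty_iff)
      then obtain j where j: "j < k" "pmax X k \<omega> = X j \<omega>" by auto
      have "(X j \<omega>)\<^sup>2 \<le> (\<Sum>i<k. (X i \<omega>)\<^sup>2)"
        using j by (intro member_le_sum) auto
      then show "norm ((pmax X k \<omega>)\<^sup>2) \<le> norm (\<Sum>i<k. (X i \<omega>)\<^sup>2)"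
        using j by (simp add: sum_nonneg)
    qed
  qed auto
  have sqZ: "integrable M (\<lambda>\<omega>. (Zinc X k \<omega>)\<^sup>2)" if k: "1 \<le> k" for k
    unfolding Zinc_def using k by (intro L2_diff sqP) auto
  have Zi: "integrable M (Zinc X k)" if "1 \<le> k" for k
    by (rule square_integrable_imp_integrable[OF Zm sqZ[OF that]])
  have int0: "integrable M (X 0)"
    by (rule square_integrable_imp_integrable[OF meas sqX])
  have epos: "0 < (\<integral>\<omega>. Zinc X k \<omega> \<partial>M)" if "1 \<le> k" for k
    by (rule Zinc_pos[OF meas assms(3) assms(4) nondeg Zi[OF that] int0 that])
  obtain C k0 where k0: "k0 \<ge> (1::nat)" and Cb: "\<And>k. k \<ge> k0 \<Longrightarrow>
     (\<integral>\<omega>. (Zinc X k \<omega>)\<^sup>2 \<partial>M) / (real k * (\<integral>\<omega>. Zinc X k \<omega> \<partial>M)\<^sup>2) \<le> C"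
    using assms(8) by blast
  define H where "H n = (\<Sum>k\<in>{k0..<n}. 1 / real k)" for n
  have bnd: "0 \<le> blue_var M X t1 t2 n \<and> blue_var M X t1 t2 n \<le> t2\<^sup>2 * C / H n" if n: "k0 < n" for n
  proof -
    obtain c where c: "unbiased_theta2 M X n c"
      "variance (lin_est X t1 t2 c n) \<le> t2\<^sup>2 * C / H n"
      using estimator[OF k0 n Zm sqZ Zi epos assms(7) Cb assms(9), of t1] unfolding H_def by blast
    define V where "V = {variance (lin_est X t1 t2 c n) | c. unbiased_theta2 M X n c}"
    have Vnn: "v \<in> V \<Longrightarrow> 0 \<le> v" for v unfolding V_def by (auto intro: integral_nonneg)
    have mem: "variance (lin_est X t1 t2 c n) \<in> V" unfolding V_def using c by auto
    have bdd: "bdd_below V" by (rule bdd_belowI[where m=0]) (rule Vnn)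
    have "blue_var M X t1 t2 n = Inf V" unfolding blue_var_def V_def ..
    moreover have "Inf V \<le> t2\<^sup>2 * C / H n" using cInf_lower[OF mem bdd] c(2) by linarith
    moreover have "0 \<le> Inf V" using mem Vnn by (intro cInf_greatest) auto
    ultimately show ?thesis by simp
  qed
  have Hl: "ln (real n) / 2 \<le> H n" if n: "k0\<^sup>2 \<le> n" "k0 \<le> n" for n
  proof -
    have "ln (real n) - ln (real k0) \<le> H n" unfolding H_def by (rule harm_lower[OF k0 n(2)])
    moreover have "2 * ln (real k0) \<le> ln (real n)"
    proof -
      have "2 * ln (real k0) = ln (real (k0\<^sup>2))" using k0 by (simp add: ln_realpow)
      also have "\<dots> \<le> ln (real n)" using n k0 by (subst ln_le_cancel_iff) auto
      finally show ?thesis .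
    qed
    ultimately show ?thesis by linarith
  qed
  show ?thesis
  proof (rule bigoI[where c = "2 * t2\<^sup>2 * \<bar>C\<bar>"])
    show "eventually (\<lambda>n. norm (blue_var M X t1 t2 n) \<le> 2 * t2\<^sup>2 * \<bar>C\<bar> * norm (1 / ln (real n))) at_top"
      using eventually_ge_at_top[of "k0 + 1 + k0\<^sup>2 + 2"]
    proof eventually_elim
      case (elim n)
      have n1: "k0 < n" "k0\<^sup>2 \<le> n" "k0 \<le> n" using elim by auto
      have lnpos: "0 < ln (real n)" using elim by auto
      have Hp: "ln (real n) / 2 \<le> H n" using Hl[OF n1(2,3)] .
      have b: "0 \<le> blue_var M X t1 t2 n" "blue_var M X t1 t2 n \<le> t2\<^sup>2 * C / H n" using bnd[OF n1(1)] by auto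
      have "t2\<^sup>2 * C / H n \<le> t2\<^sup>2 * \<bar>C\<bar> / H n" using lnpos Hp
        by (intro divide_right_mono mult_left_mono) auto
      also have "\<dots> \<le> t2\<^sup>2 * \<bar>C\<bar> / (ln (real n) / 2)" using lnpos Hp
        by (intro divide_left_mono) auto
      also have "\<dots> = 2 * t2\<^sup>2 * \<bar>C\<bar> * norm (1 / ln (real n))" using lnpos by simp
      finally show ?case using b by simp
    qed
  qed
qed

end
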